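(* Let $n\ge2$, $0<R<\sqrt{\tfrac38(3n-5)(2n-3)^3}$, let $u_0$ satisfy (C1)–(C6), and let $\lambda>0$ with $\lambda R<x_1$. Then there is $C>0$ such that $v(r,t):=Ce^{-\lambda^2t}r^{n-\frac32}J_\nu(\lambda r)$ satisfies $u_0\ge u^*-v(\cdot,0)$ in $B_R$.
   Context: $B_R=\{x\in\mathbb R^n:|x|<R\}$; radial functions written in $r=|x|$, subscript $r$ = radial derivative. $\alpha:=\sqrt[3]{9n-15}$, $u^*(r):=-\alpha r^{1/3}$, $\nu:=\tfrac16\sqrt{36n^2-96n+61}$, $J_\nu$ the Bessel function of the first kind of order $\nu$; $x_0>0$, $x_1\in(0,x_0)$ the first positive roots of $J_\nu$ and $J_\nu'$. Conditions on $u_0$: (C1) $u_0\in C^2(\overline{B_R}\setminus\{0\})$; (C2) $u_0$ radially symmetric; (C3) $u^*\ge u_0$; (C4) $\limsup_{r\searrow0}|r^{\frac32-n-\nu}(u^*(r)-u_0(r))|<\infty$; (C5) $u_0(R)=u^*(R)$; (C6) there is $C>0$ with $0\ge u_{0r}(r)\ge -Cr^{-2/3}$ for all $r\in(0,R)$. *)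

theory Defs
  imports "HOL-Analysis.Analysis" "HOL-Library.Liminf_Limsup"
begin

(* Bessel function of the first kind of order nu (series definition, used for x > 0) *)
definition besselJ :: "real \<Rightarrow> real \<Rightarrow> real" where
  "besselJ \<nu> x = (\<Sum>m. (-1) ^ m / (fact m * Gamma (real m + \<nu> + 1)) * (x / 2) powr (2 * real m + \<nu>))"

definition nu :: "nat \<Rightarrow> real" where
  "nu n = sqrt (36 * (real n)^2 - 96 * real n + 61) / 6"

definition alpha :: "nat \<Rightarrow> real" where
  "alpha n = root 3 (9 * real n - 15)"

definition ustar :: "nat \<Rightarrow> real \<Rightarrow> real" where
  "ustar n r = - alpha n * r powr (1/3)"

definition x1 :: "real \<Rightarrow> real" where
  "x1 \<nu> = Inf {x. 0 < x \<and> deriv (besselJ \<nu>) x = 0}"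

definition vfun :: "nat \<Rightarrow> real \<Rightarrow> real \<Rightarrow> real \<Rightarrow> real \<Rightarrow> real" where
  "vfun n C lam r t = C * exp (- ((lam ^ 2) * t)) * r powr (real n - 3/2) * besselJ (nu n) (lam * r)"

(* radial profile f is C^2 on (0,R] (one-sided derivatives at R), i.e. u0 in C^2(closed ball minus 0) *)
definition C2_on_0R :: "(real \<Rightarrow> real) \<Rightarrow> real \<Rightarrow> bool" where
  "C2_on_0R f R \<longleftrightarrow> (\<exists>f1 f2. (\<forall>r\<in>{0<..R}. (f has_real_derivative f1 r) (at r within {0<..R})
      \<and> (f1 has_real_derivative f2 r) (at r within {0<..R})) \<and> continuous_on {0<..R} f2)"

end

theory Submission
  imports Defs
begin

definition cf :: "real \<Rightarrow> nat \<Rightarrow> real" where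
  "cf v m = (-1) ^ m / (fact m * Gamma (real m + v + 1))"

definition FF :: "real \<Rightarrow> real \<Rightarrow> real" where
  "FF v y = (\<Sum>m. cf v m * y ^ m)"

lemma poch_ge1: "(a::real) \<ge> 1 \<Longrightarrow> pochhammer a m \<ge> 1"
proof (induction m)
  case 0 then show ?case by simp
next
  case (Suc m)
  have "1 * 1 \<le> pochhammer a m * (a + real m)"
    by (intro mult_mono) (use Suc in auto)
  then show ?case by (simp add: pochhammer_Suc)
qed

lemma Gamma_ge: assumes "v \<ge> 0" shows "Gamma (real m + v + 1) \<ge> Gamma (v + 1)"
proof -
  have nz: "v + 1 \<notin> \<int>\<^sub>\<le>\<^sub>0" using assms
    by (metis add_nonneg_pos less_numeral_extra(1) nonpos_Ints_nonpos not_le)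
  have p: "pochhammer (v+1) m = Gamma (v + 1 + real m) / Gamma (v+1)"
    using pochhammer_Gamma[OF nz] by simp
  have g: "Gamma (v+1) > 0" using assms by simp
  have "1 \<le> Gamma (v + 1 + real m) / Gamma (v+1)" using p poch_ge1[of "v+1" m] assms by simp
  then show ?thesis using g by (simp add: field_simps algebra_simps)
qed

lemma cf_summable: assumes "v \<ge> 0" shows "summable (\<lambda>m. cf v m * y ^ m)"
proof (rule summable_comparison_test'[where g="\<lambda>m. \<bar>y\<bar>^m / fact m / Gamma (v+1)"])
  show "summable (\<lambda>m. \<bar>y\<bar>^m / fact m / Gamma (v+1))"
    using summable_exp[of "\<bar>y\<bar>"] by (intro summable_divide) (simp add: inverse_eq_divide)
  fix m :: nat
  have g: "Gamma (v+1) > 0" using assms by simp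
  have "norm (cf v m * y ^ m) = \<bar>y\<bar>^m / (fact m * Gamma (real m + v + 1))"
    using assms by (simp add: cf_def abs_mult power_abs)
  also have "\<dots> \<le> \<bar>y\<bar>^m / (fact m * Gamma (v+1))"
    using Gamma_ge[OF assms, of m] g
    by (intro divide_left_mono mult_left_mono) (auto intro!: mult_pos_pos)
  finally show "norm (cf v m * y ^ m) \<le> \<bar>y\<bar>^m / fact m / Gamma (v+1)" by simp
qed

lemma FF_deriv: assumes "v \<ge> 0" shows "(FF v has_real_derivative (\<Sum>n. diffs (cf v) n * y^n)) (at y)"
  unfolding FF_def[abs_def] by (rule termdiffs_strong_converges_everywhere) (rule cf_summable[OF assms])

lemma FF_cont: assumes "v \<ge> 0" shows "isCont (FF v) y"
  using FF_deriv[OF assms] DERIV_isCont by blast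

lemma FF_0: "FF v 0 = 1 / Gamma (v + 1)"
proof -
  have "(\<lambda>m. cf v m * 0 ^ m) sums cf v 0"
    using powser_sums_zero[of "cf v"] by simp
  then show ?thesis unfolding FF_def by (simp add: sums_iff cf_def)
qed

lemma besselJ_eq: assumes "x > 0" "v \<ge> 0"
  shows "besselJ v x = (x/2) powr v * FF v (x^2/4)"
proof -
  have "\<And>m. (-1) ^ m / (fact m * Gamma (real m + v + 1)) * (x / 2) powr (2 * real m + v)
        = (x/2) powr v * (cf v m * (x^2/4) ^ m)"
  proof -
    fix m
    have "(x / 2) powr (2 * real m + v) = (x/2) powr v * (x^2/4)^m"
      using assms by (simp add: powr_add powr_realpow[symmetric] powr_powr[symmetric] power2_eq_square
           flip: powr_realpow)
    then show "(-1) ^ m / (fact m * Gamma (real m + v + 1)) * (x / 2) powr (2 * real m + v)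
        = (x/2) powr v * (cf v m * (x^2/4) ^ m)" by (simp add: cf_def)
  qed
  then show ?thesis unfolding besselJ_def FF_def
    using suminf_mult[OF cf_summable[OF assms(2)], of "(x/2) powr v" "x^2/4"] by simp
qed

lemma J_deriv: assumes "x > 0" "v \<ge> 0" shows "\<exists>D. (besselJ v has_real_derivative D) (at x)"
proof -
  have "\<exists>D. ((\<lambda>x. (x/2) powr v * FF v (x^2/4)) has_real_derivative D) (at x)"
  proof -
    have d1: "((\<lambda>x. (x/2) powr v) has_real_derivative (v * (x/2) powr (v-1) * (1/2))) (at x)"
      using assms by (auto intro!: derivative_eq_intros)
    have d0: "((\<lambda>x. x^2/4) has_real_derivative (2*x/4)) (at x)"
      by (auto intro!: derivative_eq_intros)
    have d2: "((\<lambda>x. FF v (x^2/4)) has_real_derivative ((\<Sum>n. diffs (cf v) n * (x^2/4)^n) * (2*x/4))) (at x)"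
      by (rule DERIV_chain2[OF FF_deriv[OF assms(2)] d0])
    show ?thesis using DERIV_mult[OF d1 d2] by blast
  qed
  then obtain D where D: "((\<lambda>x. (x/2) powr v * FF v (x^2/4)) has_real_derivative D) (at x)" by blast
  have "(besselJ v has_real_derivative D) (at x)"
    by (rule has_field_derivative_transform_within_open[OF D, of "{0<..}"])
       (use assms besselJ_eq in auto)
  then show ?thesis by blast
qed

lemma J_cont: assumes "x > 0" "v \<ge> 0" shows "isCont (besselJ v) x"
  using J_deriv[OF assms] DERIV_isCont by blast

lemma J_ratio: assumes "v \<ge> 0"
  shows "((\<lambda>x. FF v (x^2/4)) \<longlongrightarrow> 1 / Gamma (v+1)) (at_right 0)"
proof -
  have "isCont (\<lambda>x. FF v (x^2/4)) 0"
    by (intro continuous_intros isCont_o2[OF _ FF_cont[OF assms]]) auto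
  then have "((\<lambda>x. FF v (x^2/4)) \<longlongrightarrow> FF v 0) (at 0)"
    by (simp add: isCont_def)
  then show ?thesis by (simp add: FF_0 filterlim_at_split)
qed

lemma J_lim0: assumes "v > 0" shows "(besselJ v \<longlongrightarrow> 0) (at_right 0)"
proof -
  have "((\<lambda>x. (x/2) powr v * FF v (x^2/4)) \<longlongrightarrow> 0 * (1 / Gamma (v+1))) (at_right 0)"
  proof (intro tendsto_mult J_ratio)
    have "((\<lambda>x. x/2) \<longlongrightarrow> 0) (at_right (0::real))"
      by (intro tendsto_eq_intros) (auto intro: tendsto_ident_at)
    then show "((\<lambda>x. (x/2) powr v) \<longlongrightarrow> 0) (at_right 0)"
      using assms by (intro tendsto_zero_powrI) (auto simp: eventually_at_right_field intro!: exI[of _ 1])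
  qed (use assms in auto)
  moreover have ev: "eventually (\<lambda>x. besselJ v x = (x/2) powr v * FF v (x^2/4)) (at_right 0)"
    by (auto simp: eventually_at_right_field besselJ_eq assms less_imp_le intro!: exI[of _ 1])
  ultimately show ?thesis using tendsto_cong[OF ev] by simp
qed

lemma J_pos0: assumes "v > 0" shows "\<exists>d>0. \<forall>y. 0 < y \<and> y < d \<longrightarrow> besselJ v y \<ge> (y/2) powr v / (2 * Gamma (v+1))"
proof -
  have g: "Gamma (v+1) > 0" using assms by simp
  have "1 / (2 * Gamma (v+1)) < 1 / Gamma (v+1)" using g by (simp add: field_simps)
  from order_tendstoD(1)[OF J_ratio this] assms
  have "eventually (\<lambda>y. FF v (y^2/4) > 1 / (2 * Gamma (v+1))) (at_right 0)" by simp
  then obtain d where d: "d > 0" "\<And>y. 0 < y \<Longrightarrow> y < d \<Longrightarrow> FF v (y^2/4) > 1 / (2 * Gamma (v+1))"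
    unfolding eventually_at_right_field by auto
  have "besselJ v y \<ge> (y/2) powr v / (2 * Gamma (v+1))" if "0 < y" "y < d" for y
  proof -
    have "(y/2) powr v * (1 / (2 * Gamma (v+1))) \<le> (y/2) powr v * FF v (y^2/4)"
      using d(2)[OF that] by (intro mult_left_mono) auto
    then show ?thesis using besselJ_eq[of y v] that assms by simp
  qed
  then show ?thesis using d(1) by blast
qed

lemma J_pos: assumes "v > 0" and nocrit: "\<And>z. 0 < z \<Longrightarrow> z \<le> a \<Longrightarrow> deriv (besselJ v) z \<noteq> 0"
  and x: "0 < x" "x \<le> a" shows "besselJ v x > 0"
proof (rule ccontr)
  assume neg: "\<not> besselJ v x > 0"
  have g: "Gamma (v+1) > 0" using assms by simp
  obtain d0 where d0: "d0 > 0" "\<And>y. 0 < y \<Longrightarrow> y < d0 \<Longrightarrow> besselJ v y > 0"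
  proof -
    obtain d where d: "d>0" "\<forall>y. 0 < y \<and> y < d \<longrightarrow> besselJ v y \<ge> (y/2) powr v / (2 * Gamma (v+1))"
      using J_pos0[OF assms(1)] by blast
    have "besselJ v y > 0" if "0 < y" "y < d" for y
    proof -
      have "(y/2) powr v / (2 * Gamma (v+1)) > 0" using that g by simp
      then show ?thesis using d(2) that by force
    qed
    then show ?thesis using that d(1) by blast
  qed
  define e where "e = min d0 x / 2"
  have e: "0 < e" "e < d0" "e < x" using d0 x by (auto simp: e_def)
  have Je: "besselJ v e > 0" using d0 e by auto
  from order_tendstoD(2)[OF J_lim0[OF assms(1)] Je]
  obtain d1 where d1: "d1 > 0" "\<And>y. 0 < y \<Longrightarrow> y < d1 \<Longrightarrow> besselJ v y < besselJ v e"
    unfolding eventually_at_right_field by auto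
  define dl where "dl = min d1 e / 2"
  have dl: "0 < dl" "dl < d1" "dl < e" using d1 e by (auto simp: dl_def)
  have Jdl: "besselJ v dl > 0" "besselJ v dl < besselJ v e" using d0 d1 dl e by auto
  have cont: "continuous_on {p..q} (besselJ v)" if "0 < p" for p q
    using J_cont assms(1) that by (intro continuous_at_imp_continuous_on) auto
  obtain q where q: "e \<le> q" "q \<le> x" "besselJ v q = besselJ v dl"
    using IVT2'[of "besselJ v" x "besselJ v dl" e, OF _ _ _ cont] neg Jdl e by force
  obtain z where z: "dl < z" "z < q" "DERIV (besselJ v) z :> 0"
  proof -
    have "\<exists>z. dl < z \<and> z < q \<and> DERIV (besselJ v) z :> 0"
    proof (rule Rolle)
      show "dl < q" using dl q by linarith
      show "besselJ v dl = besselJ v q" using q by simp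
      show "continuous_on {dl..q} (besselJ v)" using cont dl by blast
      fix y assume "dl < y" "y < q"
      then show "besselJ v differentiable (at y)"
        using J_deriv[of y v] dl assms(1) real_differentiable_def by fastforce
    qed
    then show ?thesis using that by blast
  qed
  have "deriv (besselJ v) z = 0" using DERIV_imp_deriv[OF z(3)] .
  moreover have "0 < z" "z \<le> a" using z dl q x by linarith+
  ultimately show False using nocrit by blast
qed

theorem mainTheorem10:
  fixes n :: nat and R lam :: real and u0 :: "real \<Rightarrow> real"
  assumes "n \<ge> 2"
    and "0 < R" and "R < sqrt (3/8 * (3 * real n - 5) * (2 * real n - 3)^3)"
    and C1: "C2_on_0R u0 R"
    and C3: "\<forall>r\<in>{0<..R}. ustar n r \<ge> u0 r"
    and C4: "Limsup (at_right 0) (\<lambda>r. ereal \<bar>r powr (3/2 - real n - nu n) * (ustar n r - u0 r)\<bar>) < \<infinity>"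
    and C5: "u0 R = ustar n R"
    and C6: "\<exists>C>0. \<forall>r\<in>{0<..<R}. 0 \<ge> deriv u0 r \<and> deriv u0 r \<ge> - C * r powr (-2/3)"
    and "lam > 0" and "lam * R < x1 (nu n)"
  shows "\<exists>C>0. \<forall>r\<in>{0<..<R}. u0 r \<ge> ustar n r - vfun n C lam r 0"
proof -
  define v where "v = nu n"
  have nn: "real n \<ge> 2" using assms(1) by simp
  have "36 * (real n)^2 - 96 * real n + 61 = (6 * real n - 8)^2 - 3" by (simp add: power2_eq_square algebra_simps)
  also have "\<dots> > 0"
  proof -
    have "6 * real n - 8 \<ge> 4" using nn by simp
    then have "(6 * real n - 8)^2 \<ge> 4^2" by (intro power_mono) auto
    then show ?thesis by simp
  qed
  finally have v: "v > 0" unfolding v_def nu_def by simp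
  have lam: "lam > 0" using assms by simp
  define a where "a = lam * R"
  have a: "a > 0" using assms by (simp add: a_def)
  have nocrit: "deriv (besselJ v) z \<noteq> 0" if "0 < z" "z \<le> a" for z
  proof
    assume z0: "deriv (besselJ v) z = 0"
    let ?S = "{x. 0 < x \<and> deriv (besselJ v) x = 0}"
    have "z \<in> ?S" using z0 that by simp
    moreover have "bdd_below ?S" by (rule bdd_belowI[of _ 0]) auto
    ultimately have "Inf ?S \<le> z" by (rule cInf_lower)
    moreover have "z < Inf ?S" using assms(10) that unfolding x1_def v_def a_def by simp
    ultimately show False by simp
  qed
  have Jp: "besselJ v y > 0" if "0 < y" "y \<le> a" for y
    using J_pos[OF v nocrit] that by blast
  define w where "w r = ustar n r - u0 r" for r
  define phi where "phi r = r powr (real n - 3/2) * besselJ v (lam * r)" for r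
  have vf: "vfun n C lam r 0 = C * phi r" for C r
    by (simp add: vfun_def phi_def v_def)
  have w0: "w r \<ge> 0" if "0 < r" "r \<le> R" for r using C3 that by (simp add: w_def)
  have phip: "phi r > 0" if "0 < r" "r \<le> R" for r
    using Jp[of "lam * r"] that lam by (simp add: phi_def a_def)
  have "Limsup (at_right 0) (\<lambda>r. ereal \<bar>r powr (3/2 - real n - v) * w r\<bar>) \<noteq> \<infinity>"
    using C4 unfolding w_def v_def by simp
  then obtain K :: nat where K: "Limsup (at_right 0) (\<lambda>r. ereal \<bar>r powr (3/2 - real n - v) * w r\<bar>) < ereal (real K)"
    unfolding less_PInf_Ex_of_nat by blast
  obtain d1 where d1: "d1 > 0"
    "\<And>r. 0 < r \<Longrightarrow> r < d1 \<Longrightarrow> \<bar>r powr (3/2 - real n - v) * w r\<bar> < real K"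
  proof -
    have "eventually (\<lambda>r. \<bar>r powr (3/2 - real n - v) * w r\<bar> < real K) (at_right 0)"
      using Limsup_lessD[OF K] by simp
    then show ?thesis using that unfolding eventually_at_right_field by blast
  qed
  obtain d2 where d2: "d2 > 0" "\<And>y. 0 < y \<Longrightarrow> y < d2 \<Longrightarrow> besselJ v y \<ge> (y/2) powr v / (2 * Gamma (v+1))"
    using J_pos0[OF v] by blast
  define c where "c = (lam/2) powr v / (2 * Gamma (v+1))"
  have c: "c > 0" using lam v by (simp add: c_def)
  define dl where "dl = min d1 (min (d2 / lam) R) / 2"
  have dl: "0 < dl" "dl < d1" "lam * dl < d2" "dl < R"
  proof -
    have "dl \<le> d2 / lam / 2" "dl \<le> d1 / 2" "dl \<le> R / 2" by (auto simp: dl_def)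
    moreover have "min d1 (min (d2 / lam) R) > 0" using d1 d2 lam assms(2) by auto
    moreover have "lam * (d2 / lam / 2) = d2 / 2" using lam by simp
    moreover have "lam * dl \<le> lam * (d2 / lam / 2)" using calculation(1) lam by (intro mult_left_mono) auto
    moreover have "dl > 0" using calculation(4) by (simp add: dl_def)
    ultimately show "0 < dl" "dl < d1" "lam * dl < d2" "dl < R" using d1 d2 assms(2) by auto
  qed
  have near: "w r \<le> (real K / c) * phi r" if r: "0 < r" "r < dl" for r
  proof -
    have e: "real n - 3/2 + v = - (3/2 - real n - v)" by simp
    have "w r = r powr (real n - 3/2 + v) * (r powr (3/2 - real n - v) * w r)"
      proof -
        have "r powr (real n - 3/2 + v) * r powr (3/2 - real n - v) = r powr 0"
          by (simp only: powr_add[symmetric]) simp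
        then have "r powr (real n - 3/2 + v) * r powr (3/2 - real n - v) = 1" using r by simp
        then show ?thesis by (metis mult.assoc mult_1)
      qed
    also have "\<dots> \<le> r powr (real n - 3/2 + v) * real K"
      using d1(2)[of r] r dl by (intro mult_left_mono) auto
    also have "\<dots> = (real K / c) * (r powr (real n - 3/2) * (c * r powr v))"
      proof -
        have "r powr (real n - 3/2 + v) = r powr (real n - 3/2) * r powr v" by (rule powr_add)
        then show ?thesis using c by simp
      qed
    also have "\<dots> \<le> (real K / c) * phi r"
    proof -
      have "c * r powr v = (lam * r / 2) powr v / (2 * Gamma (v+1))"
        proof -
          have "(lam * r / 2) powr v = (lam/2) powr v * r powr v" using lam r
            by (subst powr_mult[symmetric]) auto
          then show ?thesis by (simp add: c_def)
        qed
      also have "\<dots> \<le> besselJ v (lam * r)"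
        proof -
          have "lam * r < lam * dl" using lam r by simp
          then have "lam * r < d2" using dl by linarith
          then show ?thesis using d2(2)[of "lam * r"] r lam by simp
        qed
      finally show ?thesis unfolding phi_def using c
        by (intro mult_left_mono) auto
    qed
    finally show ?thesis .
  qed
  obtain f1 f2 where fd: "\<And>r. r \<in> {0<..R} \<Longrightarrow> (u0 has_real_derivative f1 r) (at r within {0<..R})"
    using C1 unfolding C2_on_0R_def by blast
  have cu: "continuous_on {dl..R} u0"
    unfolding continuous_on_eq_continuous_within
  proof
    fix r assume "r \<in> {dl..R}"
    then have "r \<in> {0<..R}" using dl by auto
    from DERIV_continuous[OF fd[OF this]]
    show "continuous (at r within {dl..R}) u0"
      by (rule continuous_within_subset) (use dl in auto)
  qed
  have cw: "continuous_on {dl..R} w"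
    unfolding w_def ustar_def using cu dl by (intro continuous_intros) auto
  have cphi: "continuous_on {dl..R} phi"
  proof (intro continuous_at_imp_continuous_on ballI)
    fix r assume "r \<in> {dl..R}"
    then have r: "r > 0" using dl by auto
    have "isCont (\<lambda>r. besselJ v (lam * r)) r"
      by (rule isCont_o2[OF _ J_cont]) (use r lam v in \<open>auto intro!: continuous_intros\<close>)
    then show "isCont phi r" unfolding phi_def using r by (intro continuous_intros) auto
  qed
  obtain rM where rM: "rM \<in> {dl..R}" "\<And>y. y \<in> {dl..R} \<Longrightarrow> w y \<le> w rM"
    using continuous_attains_sup[OF compact_Icc _ cw] dl by auto
  obtain rm where rm: "rm \<in> {dl..R}" "\<And>y. y \<in> {dl..R} \<Longrightarrow> phi rm \<le> phi y"
    using continuous_attains_inf[OF compact_Icc _ cphi] dl by auto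
  define M where "M = w rM"
  define m where "m = phi rm"
  have m: "m > 0" using phip[of rm] rm dl by (auto simp: m_def)
  have M: "M \<ge> 0" using w0[of rM] rM dl by (auto simp: M_def)
  have far: "w r \<le> (M / m) * phi r" if "dl \<le> r" "r \<le> R" for r
  proof -
    have "w r \<le> M" using rM that by (auto simp: M_def)
    also have "\<dots> = (M/m) * m" using m by simp
    also have "\<dots> \<le> (M/m) * phi r" using rm that M m by (intro mult_left_mono) (auto simp: m_def)
    finally show ?thesis .
  qed
  define C where "C = max (real K / c) (M / m) + 1"
  have "M / m \<ge> 0" using m M by simp
  then have Cpos: "C > 0" by (simp add: C_def)
  show ?thesis
  proof (intro exI[of _ C] conjI ballI Cpos)
    fix r assume r: "r \<in> {0<..<R}"
    have ph: "phi r > 0" using phip r by auto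
    have "w r \<le> C * phi r"
    proof (cases "r < dl")
      case True
      have "w r \<le> (real K / c) * phi r" using near r True by auto
      also have "\<dots> \<le> C * phi r" using ph by (intro mult_right_mono) (auto simp: C_def)
      finally show ?thesis .
    next
      case False
      have "w r \<le> (M / m) * phi r" using far r False by auto
      also have "\<dots> \<le> C * phi r" using ph by (intro mult_right_mono) (auto simp: C_def)
      finally show ?thesis .
    qed
    then show "u0 r \<ge> ustar n r - vfun n C lam r 0" by (simp add: vf w_def)
  qed
qed

end
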